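(* Let $\{p_{(R,\alpha)}(\mathbf{x})\}_{(R,\alpha)}$ be a replacement rule satisfying the Fixation Axiom and Assumption 1. Then the linear system $$d^\circ_gv_g=\sum_{h\in G}e^\circ_{gh}v_h\ \ (g\in G),\qquad \sum_{g\in G}v_g=n$$ has a unique solution $(v_g)_{g\in G}$, and $v_g\ge 0$ for every $g\in G$.
   Context: $G$ is a finite nonempty set of genetic sites, $n=|G|$; a state is $\mathbf{x}\in\{0,1\}^G$; $\mathbf{a}$ is the all-zero state and $\mathbf{A}$ the all-one state. A replacement event is $(R,\alpha)$ with $R\subseteq G$, $\alpha:R\to G$; a replacement rule gives for each state a probability distribution $\{p_{(R,\alpha)}(\mathbf{x})\}$ over events. Fixation Axiom: there exist $g\in G$, $m\ge1$, events $(R_k,\alpha_k)_{k=1}^m$ with $p_{(R_k,\alpha_k)}(\mathbf{x})>0$ for all $k$ and all states $\mathbf{x}$, $g\in R_k$ for some $k$, and $\tilde\alpha_1\circ\cdots\circ\tilde\alpha_m(h)=g$ for all $h\in G$, where $\tilde\alpha_k$ equals $\alpha_k$ on $R_k$ and the identity elsewhere. Assumption 1: $p_{(R,\alpha)}(\mathbf{A})=p_{(R,\alpha)}(\mathbf{a})=:p^\circ_{(R,\alpha)}$ for every event. Then $e^\circ_{gh}=\sum_{(R,\alpha):h\in R,\alpha(h)=g}p^\circ_{(R,\alpha)}$ and $d^\circ_g=\sum_he^\circ_{hg}$. *)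

theory Defs
  imports Complex_Main "HOL-Library.FuncSet"
begin

text \<open>A state x in {0,1}^G is encoded as the
subset of G where x equals 1; so the all-zero state a is {} and the all-one state A is G.
A replacement event (R, alpha) with R a subset of G and alpha : R -> G is encoded as a pair
whose second component is an extensional function (undefined outside R), so that each
event has exactly one representation.\<close>

type_synonym 'g event = "'g set \<times> ('g \<Rightarrow> 'g)"

definition states :: "'g set \<Rightarrow> 'g set set" where
  "states G = Pow G"

definition events :: "'g set \<Rightarrow> 'g event set" where
  "events G = {(R, \<alpha>). R \<subseteq> G \<and> \<alpha> \<in> R \<rightarrow>\<^sub>E G}"

definition replacement_rule :: "'g set \<Rightarrow> ('g set \<Rightarrow> 'g event \<Rightarrow> real) \<Rightarrow> bool" where
  "replacement_rule G p \<longleftrightarrow>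
     (\<forall>x \<in> states G. (\<forall>e \<in> events G. p x e \<ge> 0) \<and> (\<Sum>e \<in> events G. p x e) = 1)"

definition ext_map :: "'g event \<Rightarrow> 'g \<Rightarrow> 'g" where
  "ext_map ev h = (if h \<in> fst ev then snd ev h else h)"

definition fixation_axiom :: "'g set \<Rightarrow> ('g set \<Rightarrow> 'g event \<Rightarrow> real) \<Rightarrow> bool" where
  "fixation_axiom G p \<longleftrightarrow>
     (\<exists>g \<in> G. \<exists>evs :: 'g event list. length evs \<ge> 1 \<and>
        (\<forall>k < length evs. evs ! k \<in> events G \<and> (\<forall>x \<in> states G. p x (evs ! k) > 0)) \<and>
        (\<exists>k < length evs. g \<in> fst (evs ! k)) \<and>
        (\<forall>h \<in> G. foldr (\<circ>) (map ext_map evs) id h = g))"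

definition assumption1 :: "'g set \<Rightarrow> ('g set \<Rightarrow> 'g event \<Rightarrow> real) \<Rightarrow> bool" where
  "assumption1 G p \<longleftrightarrow> (\<forall>e \<in> events G. p G e = p {} e)"

definition p_circ :: "('g set \<Rightarrow> 'g event \<Rightarrow> real) \<Rightarrow> 'g event \<Rightarrow> real" where
  "p_circ p e = p {} e"

definition e_circ :: "'g set \<Rightarrow> ('g set \<Rightarrow> 'g event \<Rightarrow> real) \<Rightarrow> 'g \<Rightarrow> 'g \<Rightarrow> real" where
  "e_circ G p g h = (\<Sum>ev \<in> {ev \<in> events G. h \<in> fst ev \<and> snd ev h = g}. p_circ p ev)"

definition d_circ :: "'g set \<Rightarrow> ('g set \<Rightarrow> 'g event \<Rightarrow> real) \<Rightarrow> 'g \<Rightarrow> real" where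
  "d_circ G p g = (\<Sum>h \<in> G. e_circ G p h g)"

definition lin_system :: "'g set \<Rightarrow> ('g set \<Rightarrow> 'g event \<Rightarrow> real) \<Rightarrow> ('g \<Rightarrow> real) \<Rightarrow> bool" where
  "lin_system G p v \<longleftrightarrow>
     v \<in> extensional G \<and>
     (\<forall>g \<in> G. d_circ G p g * v g = (\<Sum>h \<in> G. e_circ G p g h * v h)) \<and>
     (\<Sum>g \<in> G. v g) = real (card G)"

end

theory Submission imports Defs "Jordan_Normal_Form.Determinant" begin
lemma kernel_exists:
  fixes G :: "'g set" and E :: "'g \<Rightarrow> 'g \<Rightarrow> real"
  assumes fin: "finite G" and ne: "G \<noteq> {}"
  shows "\<exists>w. (\<exists>g\<in>G. w g \<noteq> 0) \<and>
     (\<forall>g\<in>G. (\<Sum>h\<in>G. E h g) * w g = (\<Sum>h\<in>G. E g h * w h))"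
proof -
  define n where "n = card G"
  obtain f where f: "bij_betw f {0..<n} G"
    using ex_bij_betw_nat_finite[OF fin] n_def by blast
  define d where "d g = (\<Sum>h\<in>G. E h g)" for g
  define M :: "real mat" where
    "M = mat n n (\<lambda>(i,j). (if i = j then d (f i) else 0) - E (f i) (f j))"
  have M: "M \<in> carrier_mat n n" unfolding M_def by simp
  have sumf: "(\<Sum>h\<in>G. F h) = (\<Sum>j\<in>{0..<n}. F (f j))" for F :: "'g \<Rightarrow> real"
    using sum.reindex_bij_betw[OF f, of F] by simp
  have "M\<^sup>T *\<^sub>v vec n (\<lambda>_. 1) = 0\<^sub>v n"
  proof (rule eq_vecI)
    fix j assume j: "j < dim_vec (0\<^sub>v n :: real vec)"
    hence jn: "j < n" by simp
    have "(M\<^sup>T *\<^sub>v vec n (\<lambda>_. 1)) $ j = (\<Sum>i=0..<n. M $$ (i, j))"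
      using jn M by (simp add: scalar_prod_def row_def)
    also have "\<dots> = (\<Sum>i=0..<n. (if i = j then d (f i) else 0)) - (\<Sum>i=0..<n. E (f i) (f j))"
      using jn by (simp add: M_def sum_subtractf)
    also have "\<dots> = d (f j) - (\<Sum>i=0..<n. E (f i) (f j))" using jn by simp
    also have "\<dots> = 0" unfolding d_def sumf by simp
    finally show "(M\<^sup>T *\<^sub>v vec n (\<lambda>_. 1)) $ j = (0\<^sub>v n) $ j" using jn by simp
  qed (simp add: M_def)
  moreover have "vec n (\<lambda>_. 1) \<noteq> (0\<^sub>v n :: real vec)"
  proof -
    have "n > 0" using fin ne n_def by (simp add: card_gt_0_iff)
    hence "(vec n (\<lambda>_. 1) :: real vec) $ 0 \<noteq> (0\<^sub>v n) $ 0" by simp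
    thus ?thesis by metis
  qed
  ultimately have "det M\<^sup>T = 0"
    using det_0_iff_vec_prod_zero[of "M\<^sup>T" n] M
    by (metis transpose_carrier_mat vec_carrier)
  hence "det M = 0" using det_transpose[OF M] by simp
  then obtain v where v: "v \<in> carrier_vec n" "v \<noteq> 0\<^sub>v n" "M *\<^sub>v v = 0\<^sub>v n"
    using det_0_iff_vec_prod_zero[OF M] by auto
  define w where "w g = v $ (inv_into {0..<n} f g)" for g
  have wf: "w (f j) = v $ j" if "j < n" for j
    using f that unfolding w_def bij_betw_def by (simp add: inv_into_f_f)
  obtain i where i: "i < n" "v $ i \<noteq> 0" using v(1,2) by (metis eq_vecI carrier_vecD index_zero_vec(1,2))
  have fi: "f i \<in> G" using f i(1) bij_betwE by fastforce
  have eq: "(\<Sum>h\<in>G. E h g) * w g = (\<Sum>h\<in>G. E g h * w h)" if g: "g \<in> G" for g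
  proof -
    obtain k where k: "k < n" "g = f k" using f g by (metis atLeastLessThan_iff bij_betw_iff_bijections zero_le)
    have "0 = (M *\<^sub>v v) $ k" using v(3) k by simp
    also have "\<dots> = (\<Sum>j=0..<n. ((if k = j then d (f k) else 0) - E (f k) (f j)) * v $ j)"
      using k v(1) by (simp add: scalar_prod_def row_def M_def)
    also have "\<dots> = (\<Sum>j=0..<n. (if k = j then d (f k) * v $ j else 0)) - (\<Sum>j=0..<n. E (f k) (f j) * v $ j)"
      by (subst sum_subtractf[symmetric], rule sum.cong) (auto simp: left_diff_distrib)
    also have "\<dots> = d (f k) * v $ k - (\<Sum>j=0..<n. E (f k) (f j) * w (f j))"
      using k by (simp add: wf)
    also have "\<dots> = d g * w g - (\<Sum>h\<in>G. E g h * w h)"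
      using k wf sumf[of "\<lambda>h. E g h * w h"] by simp
    finally show ?thesis unfolding d_def by simp
  qed
  have "w (f i) \<noteq> 0" using wf i by simp
  thus ?thesis using fi eq by (intro exI[of _ w]) blast
qed

definition KK :: "'g set \<Rightarrow> ('g \<Rightarrow> 'g \<Rightarrow> real) \<Rightarrow> ('g \<Rightarrow> real) \<Rightarrow> bool" where
  "KK G E v \<longleftrightarrow> (\<forall>g\<in>G. (\<Sum>h\<in>G. E h g) * v g = (\<Sum>h\<in>G. E g h * v h))"

lemma sum_nonpos_eq_0_iff:
  fixes f :: "'a \<Rightarrow> real"
  assumes "finite A" "\<And>x. x \<in> A \<Longrightarrow> f x \<le> 0"
  shows "sum f A = 0 \<longleftrightarrow> (\<forall>x\<in>A. f x = 0)"
  using sum_nonneg_eq_0_iff[OF assms(1), of "\<lambda>x. - f x"] assms(2) by (auto simp: sum_negf)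

lemma colsum:
  fixes E :: "'g \<Rightarrow> 'g \<Rightarrow> real"
  shows "(\<Sum>g\<in>G. (\<Sum>h\<in>G. E h g) * v g - (\<Sum>h\<in>G. E g h * v h)) = 0"
proof -
  have "(\<Sum>g\<in>G. (\<Sum>h\<in>G. E h g) * v g) = (\<Sum>g\<in>G. \<Sum>h\<in>G. E h g * v g)"
    by (simp add: sum_distrib_right)
  also have "\<dots> = (\<Sum>h\<in>G. \<Sum>g\<in>G. E h g * v g)" by (rule sum.swap)
  finally show ?thesis by (simp add: sum_subtractf)
qed

lemma KK_pos:
  fixes E :: "'g \<Rightarrow> 'g \<Rightarrow> real"
  assumes fin: "finite G" and nn: "\<And>g h. g \<in> G \<Longrightarrow> h \<in> G \<Longrightarrow> E g h \<ge> 0"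
    and K: "KK G E v"
  shows "KK G E (\<lambda>g. max (v g) 0)"
proof -
  define x where "x g = max (v g) 0" for g
  define r where "r g = (\<Sum>h\<in>G. E h g) * x g - (\<Sum>h\<in>G. E g h * x h)" for g
  have le: "r g \<le> 0" if g: "g \<in> G" for g
  proof (cases "v g > 0")
    case True
    have "(\<Sum>h\<in>G. E g h * v h) \<le> (\<Sum>h\<in>G. E g h * x h)"
      by (rule sum_mono) (auto simp: x_def intro!: mult_left_mono nn g)
    thus ?thesis using K g True unfolding KK_def r_def x_def by auto
  next
    case False
    have "0 \<le> (\<Sum>h\<in>G. E g h * x h)"
      by (rule sum_nonneg) (auto simp: x_def intro!: mult_nonneg_nonneg nn g)
    thus ?thesis using False unfolding r_def x_def by auto
  qed
  have "sum r G = 0" unfolding r_def by (rule colsum)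
  hence "\<forall>g\<in>G. r g = 0" using sum_nonpos_eq_0_iff[OF fin, of r] le by auto
  thus ?thesis unfolding KK_def r_def x_def by auto
qed

lemma KK_neg: "KK G E v \<Longrightarrow> KK G E (\<lambda>g. - v g)"
  unfolding KK_def by (simp add: sum_negf)

lemma KK_reach:
  fixes E :: "'g \<Rightarrow> 'g \<Rightarrow> real"
  assumes fin: "finite G" and nn: "\<And>g h. g \<in> G \<Longrightarrow> h \<in> G \<Longrightarrow> E g h \<ge> 0"
    and K: "KK G E x" and xnn: "\<And>g. g \<in> G \<Longrightarrow> x g \<ge> 0"
    and r: "(a, b) \<in> {(h, g). h \<in> G \<and> g \<in> G \<and> E g h > 0}\<^sup>*"
    and xa: "x a > 0"
  shows "x b > 0"
  using r
proof (induction rule: rtrancl_induct)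
  case base thus ?case using xa .
next
  case (step c b)
  hence c: "c \<in> G" "b \<in> G" "E b c > 0" "x c > 0" by auto
  show ?case
  proof (rule ccontr)
    assume "\<not> x b > 0"
    hence xb: "x b = 0" using xnn c(2) by force
    hence "(\<Sum>h\<in>G. E b h * x h) = 0" using K c(2) unfolding KK_def by force
    hence "\<forall>h\<in>G. E b h * x h = 0"
      using sum_nonneg_eq_0_iff[OF fin, of "\<lambda>h. E b h * x h"] nn xnn c(2) by (simp add: mult_nonneg_nonneg)
    thus False using c by auto
  qed
qed

lemma sign_split:
  fixes u :: "'g \<Rightarrow> real"
  assumes fin: "finite G" and s: "sum u G = 0" and g: "g \<in> G" "u g \<noteq> 0"
  shows "\<exists>a\<in>G. u a > 0"
proof (rule ccontr)
  assume "\<not> ?thesis"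
  hence "\<forall>a\<in>G. u a \<le> 0" by auto
  hence "\<forall>a\<in>G. u a = 0" using sum_nonpos_eq_0_iff[OF fin] s by blast
  thus False using g by auto
qed

lemma main_abstract:
  fixes E :: "'g \<Rightarrow> 'g \<Rightarrow> real"
  assumes fin: "finite G" and ne: "G \<noteq> {}"
    and nn: "\<And>g h. g \<in> G \<Longrightarrow> h \<in> G \<Longrightarrow> E g h \<ge> 0"
    and g0: "g0 \<in> G" and reach: "\<And>h. h \<in> G \<Longrightarrow> (h, g0) \<in> {(h, g). h \<in> G \<and> g \<in> G \<and> E g h > 0}\<^sup>*"
  shows "(\<exists>!v. v \<in> extensional G \<and> KK G E v \<and> sum v G = real (card G))
    \<and> (\<forall>v. v \<in> extensional G \<and> KK G E v \<and> sum v G = real (card G) \<longrightarrow> (\<forall>g\<in>G. v g \<ge> 0))"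
proof -
  have key: "x g0 > 0" if K: "KK G E x" and xnn: "\<And>g. g \<in> G \<Longrightarrow> x g \<ge> 0" and a: "a \<in> G" "x a > 0" for x a
    using KK_reach[OF fin nn K xnn reach[OF a(1)] a(2)] .
  have keyp: "v g0 > 0" if K: "KK G E v" and a: "a \<in> G" "v a > 0" for v a
    using key[of "\<lambda>g. max (v g) 0" a] KK_pos[OF fin nn K] a by auto
  have keyn: "v g0 < 0" if K: "KK G E v" and a: "a \<in> G" "v a < 0" for v a
    using keyp[of "\<lambda>g. - v g" a] KK_neg[OF K] a by auto
  have nonneg: "\<forall>g\<in>G. v g \<ge> 0" if K: "KK G E v" and s: "sum v G = real (card G)" for v
  proof (rule ccontr)
    assume "\<not> ?thesis"
    then obtain a where a: "a \<in> G" "v a < 0" by force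
    have "sum v G > 0" using s fin ne by (simp add: card_gt_0_iff)
    then obtain b where b: "b \<in> G" "v b > 0"
      by (metis not_less sum_nonpos)
    show False using keyp[OF K b] keyn[OF K a] by simp
  qed
  obtain w where w: "\<exists>g\<in>G. w g \<noteq> 0" "KK G E w"
    using kernel_exists[OF fin ne, of E] unfolding KK_def by blast
  obtain x where x: "KK G E x" "\<And>g. g \<in> G \<Longrightarrow> x g \<ge> 0" "x g0 > 0"
  proof -
    obtain a where a: "a \<in> G" "w a \<noteq> 0" using w(1) by blast
    show ?thesis
    proof (cases "w a > 0")
      case True
      show ?thesis using that[OF KK_pos[OF fin nn w(2)]] keyp[OF w(2) a(1) True] by auto
    next
      case False
      hence "w a < 0" using a by auto
      show ?thesis using that[OF KK_pos[OF fin nn KK_neg[OF w(2)]]] keyn[OF w(2) a(1) \<open>w a < 0\<close>] by auto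
    qed
  qed
  define S where "S = sum x G"
  have "x g0 \<le> S" unfolding S_def using member_le_sum[OF g0 _ fin, of x] x(2) by auto
  hence S: "S > 0" using x(3) by simp
  define v where "v = restrict (\<lambda>g. real (card G) * x g / S) G"
  have vK: "KK G E v" using x(1) unfolding KK_def v_def
  proof (intro ballI)
    fix g assume K: "\<forall>g\<in>G. (\<Sum>h\<in>G. E h g) * x g = (\<Sum>h\<in>G. E g h * x h)" and g: "g \<in> G"
    have "(\<Sum>h\<in>G. E g h * restrict (\<lambda>g. real (card G) * x g / S) G h)
        = (real (card G) / S) * (\<Sum>h\<in>G. E g h * x h)"
      by (subst sum_distrib_left, rule sum.cong) auto
    also have "\<dots> = (real (card G) / S) * ((\<Sum>h\<in>G. E h g) * x g)" using K g by simp
    finally show "(\<Sum>h\<in>G. E h g) * restrict (\<lambda>g. real (card G) * x g / S) G g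
        = (\<Sum>h\<in>G. E g h * restrict (\<lambda>g. real (card G) * x g / S) G h)" using g by simp
  qed
  have vs: "sum v G = real (card G)"
  proof -
    have "sum v G = (\<Sum>g\<in>G. real (card G) / S * x g)" unfolding v_def by (rule sum.cong) auto
    also have "\<dots> = real (card G) / S * S" unfolding S_def by (rule sum_distrib_left[symmetric])
    also have "\<dots> = real (card G)" using S by simp
    finally show ?thesis .
  qed
  have ve: "v \<in> extensional G" unfolding v_def by simp
  have uniq: "v1 = v2" if 1: "v1 \<in> extensional G" "KK G E v1" "sum v1 G = real (card G)"
    and 2: "v2 \<in> extensional G" "KK G E v2" "sum v2 G = real (card G)" for v1 v2
  proof (rule extensionalityI[OF 1(1) 2(1)])
    fix g assume g: "g \<in> G"
    define u where "u h = v1 h - v2 h" for h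
    have uK: "KK G E u" using 1(2) 2(2) unfolding KK_def u_def
      by (simp add: right_diff_distrib sum_subtractf)
    have us: "sum u G = 0" using 1(3) 2(3) unfolding u_def by (simp add: sum_subtractf)
    show "v1 g = v2 g"
    proof (rule ccontr)
      assume "v1 g \<noteq> v2 g"
      hence ug: "u g \<noteq> 0" unfolding u_def by simp
      obtain a where a: "a \<in> G" "u a > 0" using sign_split[OF fin us g ug] by blast
      have "sum (\<lambda>h. - u h) G = 0" using us by (simp add: sum_negf)
      then obtain b where b: "b \<in> G" "- u b > 0" using sign_split[OF fin _ g, of "\<lambda>h. - u h"] ug by auto
      show False using keyp[OF uK a] keyn[OF uK b(1)] b(2) by simp
    qed
  qed
  show ?thesis using vK vs ve uniq nonneg by blast
qed

lemma finite_events: "finite G \<Longrightarrow> finite (events G)"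
proof -
  assume fin: "finite G"
  have "events G = Sigma (Pow G) (\<lambda>R. R \<rightarrow>\<^sub>E G)" unfolding events_def by auto
  moreover have "finite (Sigma (Pow G) (\<lambda>R. R \<rightarrow>\<^sub>E G))"
    using fin by (intro finite_SigmaI finite_PiE) (auto intro: finite_subset)
  ultimately show ?thesis by simp
qed

lemma e_circ_nonneg:
  assumes "replacement_rule G p"
  shows "e_circ G p g h \<ge> 0"
proof -
  have "{} \<in> states G" unfolding states_def by simp
  hence "\<forall>e\<in>events G. p {} e \<ge> 0" using assms unfolding replacement_rule_def by blast
  thus ?thesis unfolding e_circ_def p_circ_def by (intro sum_nonneg) auto
qed

lemma ext_step:
  assumes fin: "finite G" and rr: "replacement_rule G p"
    and ev: "ev \<in> events G" and pos: "p {} ev > 0" and h: "h \<in> G"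
  shows "ext_map ev h \<in> G \<and> (h, ext_map ev h) \<in> {(h, g). h \<in> G \<and> g \<in> G \<and> e_circ G p g h > 0}\<^sup>*"
proof (cases "h \<in> fst ev")
  case True
  obtain R \<alpha> where e: "ev = (R, \<alpha>)" by (cases ev)
  have RG: "R \<subseteq> G" "\<alpha> \<in> R \<rightarrow>\<^sub>E G" using ev e unfolding events_def by auto
  have hR: "h \<in> R" using True e by simp
  have g': "\<alpha> h \<in> G" using RG(2) hR by auto
  have "{} \<in> states G" unfolding states_def by simp
  hence nn: "\<forall>e\<in>events G. p {} e \<ge> 0" using rr unfolding replacement_rule_def by blast
  have "p_circ p ev \<le> e_circ G p (\<alpha> h) h" unfolding e_circ_def
    using ev e hR nn
    by (intro member_le_sum) (auto simp: p_circ_def intro: finite_subset[OF _ finite_events[OF fin]])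
  hence "e_circ G p (\<alpha> h) h > 0" using pos unfolding p_circ_def by simp
  hence "(h, \<alpha> h) \<in> {(h, g). h \<in> G \<and> g \<in> G \<and> e_circ G p g h > 0}" using h g' by simp
  thus ?thesis using g' True e unfolding ext_map_def by auto
next
  case False
  thus ?thesis using h unfolding ext_map_def by auto
qed

lemma ext_list:
  assumes fin: "finite G" and rr: "replacement_rule G p"
    and evs: "\<forall>k < length evs. evs ! k \<in> events G \<and> p {} (evs ! k) > 0" and h: "h \<in> G"
  shows "foldr (\<circ>) (map ext_map evs) id h \<in> G \<and>
    (h, foldr (\<circ>) (map ext_map evs) id h) \<in> {(h, g). h \<in> G \<and> g \<in> G \<and> e_circ G p g h > 0}\<^sup>*"
  using evs
proof (induction evs)
  case Nil
  thus ?case using h by simp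
next
  case (Cons e es)
  have IH: "foldr (\<circ>) (map ext_map es) id h \<in> G \<and>
    (h, foldr (\<circ>) (map ext_map es) id h) \<in> {(h, g). h \<in> G \<and> g \<in> G \<and> e_circ G p g h > 0}\<^sup>*"
    using Cons.IH Cons.prems by fastforce
  have e: "e \<in> events G" "p {} e > 0" using Cons.prems by force+
  have f: "foldr (\<circ>) (map ext_map (e # es)) id h = ext_map e (foldr (\<circ>) (map ext_map es) id h)"
    by simp
  show ?case unfolding f using ext_step[OF fin rr e(1) e(2), of "foldr (\<circ>) (map ext_map es) id h"] IH
    by (meson rtrancl_trans)
qed

theorem proposition1:
  fixes G :: "'g set" and p :: "'g set \<Rightarrow> 'g event \<Rightarrow> real"
  assumes "finite G" and "G \<noteq> {}"
    and "replacement_rule G p"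
    and "fixation_axiom G p"
    and "assumption1 G p"
  shows "(\<exists>!v. lin_system G p v) \<and> (\<forall>v. lin_system G p v \<longrightarrow> (\<forall>g \<in> G. v g \<ge> 0))"
proof -
  have st: "{} \<in> states G" unfolding states_def by simp
  obtain g0 evs where g0: "g0 \<in> G"
    and evs: "\<forall>k < length evs. evs ! k \<in> events G \<and> (\<forall>x \<in> states G. p x (evs ! k) > 0)"
    and comp: "\<forall>h \<in> G. foldr (\<circ>) (map ext_map evs) id h = g0"
    using assms(4) unfolding fixation_axiom_def by blast
  have evs': "\<forall>k < length evs. evs ! k \<in> events G \<and> p {} (evs ! k) > 0" using evs st by blast
  have reach: "(h, g0) \<in> {(h, g). h \<in> G \<and> g \<in> G \<and> e_circ G p g h > 0}\<^sup>*" if "h \<in> G" for h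
  proof -
    have c: "foldr (\<circ>) (map ext_map evs) id h = g0" using comp that by blast
    show ?thesis using conjunct2[OF ext_list[OF assms(1) assms(3) evs' that]] unfolding c .
  qed
  have eq: "lin_system G p v \<longleftrightarrow> v \<in> extensional G \<and> KK G (e_circ G p) v \<and> sum v G = real (card G)" for v
    unfolding lin_system_def KK_def d_circ_def by simp
  show ?thesis unfolding eq
    by (rule main_abstract[OF assms(1) assms(2) e_circ_nonneg[OF assms(3)] g0 reach])
qed

end
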